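(* Let $\alpha\in(0,1)$ be irrational. (i) For every $n\in\mathbb N_0$ there exists a unique $(n,\alpha)$-partition of $v_{\alpha,0}$. (ii) For every $n\in\mathbb N_0$ and every $\theta\in[0,1)$ there exists a unique $(n,\alpha)$-partition of $v_{\alpha,\theta}$.
   Context: $\mathbb N_0=\{0,1,2,\ldots\}$. $v_{\alpha,\theta}(k)=\chi_{[1-\alpha,1)}(k\alpha+\theta \bmod 1)$, $k\in\mathbb Z$. With $\alpha=[a_1,a_2,\ldots]$ the continued fraction expansion ($a_n\in\mathbb N$), the words over $\{0,1\}$ are $s_{-1}=1$, $s_0=0$, $s_1=s_0^{a_1-1}s_{-1}$, $s_n=s_{n-1}^{a_n}s_{n-2}$ ($n\ge2$). For $n\in\mathbb N_0$, an $(n,\alpha)$-partition of a sequence $(f_k)_{k\in\mathbb Z}$ with $f_k\in\{0,1\}$ is a sequence $(I_j,z_j)_{j\in\mathbb Z}$ where $I_j=\{d_j,d_j+1,\ldots,d_{j+1}-1\}\subset\mathbb Z$ (with integers $d_j<d_{j+1}$), $z_j\in\{s_n,s_{n-1}\}$, $0\in I_0$, and $f_{d_j}f_{d_j+1}\cdots f_{d_{j+1}-1}=z_j$ for all $j\in\mathbb Z$. (Thus the $I_j$ tile $\mathbb Z$ and $f$ is the concatenation of the blocks $z_j$.) *)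

theory Defs
  imports Complex_Main
begin

text \<open>Continued fraction expansion alpha = [a_1, a_2, ...] of alpha in (0,1), via the Gauss map:
  cf_rem alpha 0 = alpha, cf_rem alpha (n+1) = frac (1 / cf_rem alpha n),
  and a_n = floor (1 / cf_rem alpha (n-1)) for n >= 1.\<close>
fun cf_rem :: "real \<Rightarrow> nat \<Rightarrow> real" where
  "cf_rem \<alpha> 0 = \<alpha>"
| "cf_rem \<alpha> (Suc n) = frac (1 / cf_rem \<alpha> n)"

definition cf :: "real \<Rightarrow> nat \<Rightarrow> nat" where
  "cf \<alpha> n = nat \<lfloor>1 / cf_rem \<alpha> (n - 1)\<rfloor>"

text \<open>Words with shifted index: sw alpha (k+1) is s_k, so sw alpha 0 = s_{-1}, sw alpha 1 = s_0.\<close>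
fun sw :: "real \<Rightarrow> nat \<Rightarrow> nat list" where
  "sw \<alpha> 0 = [1]"
| "sw \<alpha> (Suc 0) = [0]"
| "sw \<alpha> (Suc (Suc 0)) = concat (replicate (cf \<alpha> 1 - 1) (sw \<alpha> 1)) @ sw \<alpha> 0"
| "sw \<alpha> (Suc (Suc (Suc n))) =
     concat (replicate (cf \<alpha> (n + 2)) (sw \<alpha> (n + 2))) @ sw \<alpha> (Suc n)"

definition sword :: "real \<Rightarrow> int \<Rightarrow> nat list" where
  "sword \<alpha> k = sw \<alpha> (nat (k + 1))"

definition vseq :: "real \<Rightarrow> real \<Rightarrow> int \<Rightarrow> nat" where
  "vseq \<alpha> \<theta> k = (if 1 - \<alpha> \<le> frac (of_int k * \<alpha> + \<theta>) \<and> frac (of_int k * \<alpha> + \<theta>) < 1 then 1 else 0)"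

text \<open>An (n,alpha)-partition of f: the intervals I_j = {d j ..< d (j+1)} are encoded by the
  strictly increasing integer sequence d of left endpoints; z j is the block label.\<close>
definition is_partition :: "nat \<Rightarrow> real \<Rightarrow> (int \<Rightarrow> nat) \<Rightarrow> (int \<Rightarrow> int) \<Rightarrow> (int \<Rightarrow> nat list) \<Rightarrow> bool" where
  "is_partition n \<alpha> f d z \<longleftrightarrow>
     (\<forall>j. d j < d (j + 1)) \<and>
     (\<forall>j. z j \<in> {sword \<alpha> (int n), sword \<alpha> (int n - 1)}) \<and>
     0 \<in> {d 0 ..< d 1} \<and>
     (\<forall>j. map (\<lambda>i. f (d j + int i)) [0..<nat (d (j + 1) - d j)] = z j)"

end

theory Submission
  imports Defs
begin
definition win :: "(int \<Rightarrow> nat) \<Rightarrow> int \<Rightarrow> nat list \<Rightarrow> bool" where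
  "win f k w \<longleftrightarrow> map (\<lambda>i. f (k + int i)) [0..<length w] = w"

lemma win_nth: "win f k w \<longleftrightarrow> (\<forall>i<length w. f (k + int i) = w ! i)"
  unfolding win_def
proof
  assume H: "map (\<lambda>i. f (k + int i)) [0..<length w] = w"
  show "\<forall>i<length w. f (k + int i) = w ! i"
  proof (intro allI impI)
    fix i assume i: "i < length w"
    have "map (\<lambda>i. f (k + int i)) [0..<length w] ! i = w ! i" using H by simp
    then show "f (k + int i) = w ! i" using i by simp
  qed
next
  assume H: "\<forall>i<length w. f (k + int i) = w ! i"
  show "map (\<lambda>i. f (k + int i)) [0..<length w] = w"
    by (rule nth_equalityI) (simp_all add: H)
qed

lemma win_append: "win f k (u @ v) \<longleftrightarrow> win f k u \<and> win f (k + int (length u)) v"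
proof -
  have "(\<forall>i<length u + length v. f (k + int i) = (u @ v) ! i) \<longleftrightarrow>
        (\<forall>i<length u. f (k + int i) = u ! i) \<and> (\<forall>i<length v. f (k + int (length u) + int i) = v ! i)"
  proof safe
    fix i assume H: "\<forall>i<length u + length v. f (k + int i) = (u @ v) ! i"
    { assume "i < length u" then show "f (k + int i) = u ! i" using H[rule_format, of i] by (simp add: nth_append) }
    { assume "i < length v" then show "f (k + int (length u) + int i) = v ! i"
        using H[rule_format, of "length u + i"] by (simp add: nth_append add.assoc) }
  next
    fix i assume H1: "\<forall>i<length u. f (k + int i) = u ! i"
      and H2: "\<forall>i<length v. f (k + int (length u) + int i) = v ! i" and i: "i < length u + length v"
    show "f (k + int i) = (u @ v) ! i"
    proof (cases "i < length u")
      case True then show ?thesis using H1 by (simp add: nth_append)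
    next
      case False
      then have "f (k + int (length u) + int (i - length u)) = v ! (i - length u)" using H2[rule_format, of "i - length u"] i by linarith
      moreover have "k + int (length u) + int (i - length u) = k + int i" using False by simp
      ultimately show ?thesis using False by (simp add: nth_append)
    qed
  qed
  then show ?thesis by (simp add: win_nth)
qed

lemma len_concat_rep [simp]: "length (concat (replicate i w)) = i * length w"
  by (induction i) auto

lemma win_rep: "win f k (concat (replicate i w)) \<longleftrightarrow> (\<forall>j<i. win f (k + int (j * length w)) w)"
proof (induction i arbitrary: k)
  case 0 then show ?case by (simp add: win_def)
next
  case (Suc i)
  have "win f k (concat (replicate (Suc i) w)) \<longleftrightarrow> win f k w \<and> win f (k + int (length w)) (concat (replicate i w))"
    by (simp add: win_append)
  also have "\<dots> \<longleftrightarrow> win f k w \<and> (\<forall>j<i. win f (k + int (length w) + int (j * length w)) w)"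
    using Suc by simp
  also have "\<dots> \<longleftrightarrow> win f (k + int (0 * length w)) w \<and> (\<forall>j<i. win f (k + int (Suc j * length w)) w)"
    by (simp add: add.assoc)
  also have "\<dots> \<longleftrightarrow> (\<forall>j<Suc i. win f (k + int (j * length w)) w)"
    by (rule All_less_Suc2[symmetric])
  finally show ?case .
qed

definition blk :: "(int \<Rightarrow> nat) \<Rightarrow> int set \<Rightarrow> int \<Rightarrow> nat list \<Rightarrow> bool" where
  "blk f D k w \<longleftrightarrow> win f k w \<and> k + int (length w) \<in> D \<and> (\<forall>i. k < i \<and> i < k + int (length w) \<longrightarrow> i \<notin> D)"

definition cutset :: "(int \<Rightarrow> nat) \<Rightarrow> nat list \<Rightarrow> nat list \<Rightarrow> int set \<Rightarrow> bool" where
  "cutset f W1 W2 D \<longleftrightarrow> (\<forall>N. \<exists>k\<in>D. k \<le> N) \<and> (\<forall>k\<in>D. blk f D k W1 \<or> blk f D k W2)"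

lemma blk_unique:
  assumes b1: "blk f D k w1" and b2: "blk f D k w2" and ne: "w1 \<noteq> []" "w2 \<noteq> []"
  shows "w1 = w2"
proof -
  have "\<not> length w1 < length w2"
  proof
    assume lt: "length w1 < length w2"
    have "k + int (length w1) \<in> D" using b1 unfolding blk_def by blast
    moreover have "k < k + int (length w1)" using ne by simp
    moreover have "k + int (length w1) < k + int (length w2)" using lt by simp
    ultimately show False using b2 unfolding blk_def by blast
  qed
  moreover have "\<not> length w2 < length w1"
  proof
    assume lt: "length w2 < length w1"
    have "k + int (length w2) \<in> D" using b2 unfolding blk_def by blast
    moreover have "k < k + int (length w2)" using ne by simp
    moreover have "k + int (length w2) < k + int (length w1)" using lt by simp
    ultimately show False using b1 unfolding blk_def by blast
  qed
  ultimately have "length w1 = length w2" by simp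
  moreover have "w1 = map (\<lambda>i. f (k + int i)) [0..<length w1]" "w2 = map (\<lambda>i. f (k + int i)) [0..<length w2]"
    using b1 b2 unfolding blk_def win_def by auto
  ultimately show ?thesis by simp
qed

lemma smono_lt:
  fixes d :: "int \<Rightarrow> int"
  assumes s: "\<forall>j. d j < d (j + 1)" and lt: "i < i'"
  shows "d i < d i'"
proof -
  obtain k :: nat where k: "i' = i + 1 + int k" using lt by (metis add.commute zless_iff_Suc_zadd add.assoc of_nat_Suc)
  have "d i < d (i + 1 + int k)"
  proof (induction k)
    case 0 then show ?case using s by simp
  next
    case (Suc k)
    have "d (i + 1 + int k) < d (i + 1 + int k + 1)" using s by blast
    then show ?case using Suc by (simp add: add.assoc)
  qed
  then show ?thesis using k by simp
qed

lemma smono_le: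
  fixes d :: "int \<Rightarrow> int"
  assumes s: "\<forall>j. d j < d (j + 1)" and le: "i \<le> i'"
  shows "d i \<le> d i'"
  using smono_lt[OF s, of i i'] le by (cases "i = i'") auto

lemma smono_rev:
  fixes d :: "int \<Rightarrow> int"
  assumes s: "\<forall>j. d j < d (j + 1)" and lt: "d i < d i'"
  shows "i < i'"
  using smono_le[OF s, of i' i] lt by force

lemma smono_below:
  fixes d :: "int \<Rightarrow> int"
  assumes s: "\<forall>j. d j < d (j + 1)"
  shows "d (- int k) \<le> d 0 - int k"
proof (induction k)
  case 0 then show ?case by simp
next
  case (Suc k)
  have "d (- int (Suc k)) < d (- int (Suc k) + 1)" using s by blast
  also have "- int (Suc k) + 1 = - int k" by simp
  finally show ?case using Suc by simp
qed

lemma same_range: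
  fixes d d' :: "int \<Rightarrow> int"
  assumes s: "\<forall>j. d j < d (j + 1)" and s': "\<forall>j. d' j < d' (j + 1)"
    and r: "range d = range d'" and n: "d 0 \<le> 0" "0 < d 1" and n': "d' 0 \<le> 0" "0 < d' 1"
  shows "d = d'"
proof -
  have step_up: "d (a + 1) = d' (a + 1)" if e: "d a = d' a" for a
  proof -
    obtain l where l: "d (a + 1) = d' l" using r by (metis rangeI image_iff)
    obtain l' where l': "d' (a + 1) = d l'" using r by (metis rangeI image_iff)
    have "d' a < d' l" using e l s by (metis)
    then have "a < l" using smono_rev[OF s'] by blast
    then have "d' (a + 1) \<le> d' l" using smono_le[OF s'] by simp
    moreover have "d a < d l'" using e l' s' by metis
    then have "a < l'" using smono_rev[OF s] by blast
    then have "d (a + 1) \<le> d l'" using smono_le[OF s] by simp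
    ultimately show ?thesis using l l' by simp
  qed
  have step_down: "d (a - 1) = d' (a - 1)" if e: "d a = d' a" for a
  proof -
    obtain l where l: "d (a - 1) = d' l" using r by (metis rangeI image_iff)
    obtain l' where l': "d' (a - 1) = d l'" using r by (metis rangeI image_iff)
    have "d (a - 1) < d a" using s[rule_format, of "a - 1"] by simp
    then have "d' l < d' a" using e l by simp
    then have "l < a" using smono_rev[OF s'] by blast
    then have "d' l \<le> d' (a - 1)" using smono_le[OF s'] by simp
    moreover have "d' (a - 1) < d' a" using s'[rule_format, of "a - 1"] by simp
    then have "d l' < d a" using e l' by simp
    then have "l' < a" using smono_rev[OF s] by blast
    then have "d l' \<le> d (a - 1)" using smono_le[OF s] by simp
    ultimately show ?thesis using l l' by simp
  qed
  have base: "d 0 = d' 0"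
  proof -
    obtain i where i: "d 0 = d' i" using r by (metis rangeI image_iff)
    obtain l where l: "d' 0 = d l" using r by (metis rangeI image_iff)
    have "\<not> 1 \<le> i"
    proof
      assume "1 \<le> i" then have "d' 1 \<le> d' i" using smono_le[OF s'] by simp
      then show False using i n n' by simp
    qed
    moreover have "\<not> i \<le> -1"
    proof
      assume "i \<le> -1" then have "d' i < d' 0" using smono_lt[OF s'] by simp
      then have "d 0 < d l" using i l by simp
      then have "0 < l" using smono_rev[OF s] by blast
      then have "d 1 \<le> d l" using smono_le[OF s] by simp
      then show False using l n n' by simp
    qed
    ultimately have "i = 0" by simp
    then show ?thesis using i by simp
  qed
  have up: "d (int k) = d' (int k)" for k
  proof (induction k)
    case 0 then show ?case using base by simp
  next
    case (Suc k)
    then have "d (int k + 1) = d' (int k + 1)" using step_up by blast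
    then show ?case by (simp add: algebra_simps)
  qed
  have down: "d (- int k) = d' (- int k)" for k
  proof (induction k)
    case 0 then show ?case using base by simp
  next
    case (Suc k)
    then have h: "d (- int k - 1) = d' (- int k - 1)" using step_down by blast
    have eq: "- int (Suc k) = - int k - 1" by simp
    show ?case unfolding eq by (rule h)
  qed
  show ?thesis
  proof
    fix j show "d j = d' j"
    proof (cases "0 \<le> j")
      case True then show ?thesis using up[of "nat j"] by simp
    next
      case False then show ?thesis using down[of "nat (- j)"] by simp
    qed
  qed
qed

lemma partition_cutset:
  assumes P: "is_partition n \<alpha> f d z"
  shows "cutset f (sword \<alpha> (int n)) (sword \<alpha> (int n - 1)) (range d)"
proof -
  have s: "\<forall>j. d j < d (j + 1)" and zz: "\<forall>j. z j \<in> {sword \<alpha> (int n), sword \<alpha> (int n - 1)}"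
    and m: "\<forall>j. map (\<lambda>i. f (d j + int i)) [0..<nat (d (j + 1) - d j)] = z j"
    using P unfolding is_partition_def by auto
  have unb: "\<exists>k\<in>range d. k \<le> N" for N
  proof -
    have "d (- int (nat (d 0 - N))) \<le> d 0 - int (nat (d 0 - N))" by (rule smono_below[OF s])
    also have "\<dots> \<le> N" by simp
    finally show ?thesis by blast
  qed
  have bl: "blk f (range d) (d j) (z j)" for j
  proof -
    have len: "length (z j) = nat (d (j + 1) - d j)" using m[rule_format, of j] by (metis length_map length_upt minus_nat.diff_0)
    have e: "d j + int (length (z j)) = d (j + 1)" using len s[rule_format, of j] by simp
    have "win f (d j) (z j)" unfolding win_def using m[rule_format, of j] len by simp
    moreover have "d j + int (length (z j)) \<in> range d" using e by simp
    moreover have "\<forall>i. d j < i \<and> i < d j + int (length (z j)) \<longrightarrow> i \<notin> range d"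
    proof (intro allI impI)
      fix i assume "d j < i \<and> i < d j + int (length (z j))"
      then have a: "d j < i" "i < d (j + 1)" using e by auto
      show "i \<notin> range d"
      proof
        assume "i \<in> range d" then obtain l where l: "i = d l" by blast
        have "j < l" using smono_rev[OF s] a l by blast
        moreover have "l < j + 1" using smono_rev[OF s] a l by blast
        ultimately show False by simp
      qed
    qed
    ultimately show ?thesis unfolding blk_def by blast
  qed
  show ?thesis unfolding cutset_def
  proof (intro conjI ballI allI)
    fix N show "\<exists>k\<in>range d. k \<le> N" by (rule unb)
  next
    fix k assume "k \<in> range d"
    then obtain j where "k = d j" by blast
    then show "blk f (range d) k (sword \<alpha> (int n)) \<or> blk f (range d) k (sword \<alpha> (int n - 1))"
      using bl[of j] zz[rule_format, of j] by (metis empty_iff insert_iff)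
  qed
qed

lemma cutset_exists_partition:
  assumes C: "cutset f W1 W2 C" and ne: "W1 \<noteq> []" "W2 \<noteq> []"
   and W: "W1 = sword \<alpha> (int n)" "W2 = sword \<alpha> (int n - 1)"
  shows "\<exists>d z. is_partition n \<alpha> f d z"
proof -
  have unb: "\<exists>c\<in>C. c \<le> N" for N using C unfolding cutset_def by blast
  have blkC: "\<exists>w\<in>{W1, W2}. blk f C k w" if "k \<in> C" for k using C that unfolding cutset_def by blast
  define nx where "nx k = k + 1 + int (LEAST j. k + 1 + int j \<in> C)" for k
  define pv where "pv k = k - 1 - int (LEAST j. k - 1 - int j \<in> C)" for k
  have nx: "nx k \<in> C \<and> k < nx k \<and> (\<forall>i. k < i \<and> i < nx k \<longrightarrow> i \<notin> C)" if k: "k \<in> C" for k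
  proof -
    obtain w where w: "w \<in> {W1, W2}" "blk f C k w" using blkC[OF k] by blast
    have wne: "w \<noteq> []" using w ne by auto
    have "length w \<noteq> 0" using wne by simp
    then have eqw: "k + 1 + int (length w - 1) = k + int (length w)" by linarith
    have ex: "\<exists>j. k + 1 + int j \<in> C"
      using w(2) eqw unfolding blk_def by metis
    have "nx k \<in> C" unfolding nx_def using LeastI_ex[OF ex] by simp
    moreover have "k < nx k" unfolding nx_def by simp
    moreover have "\<forall>i. k < i \<and> i < nx k \<longrightarrow> i \<notin> C"
    proof (intro allI impI)
      fix i assume i: "k < i \<and> i < nx k"
      then have "i = k + 1 + int (nat (i - k - 1))" by simp
      moreover have "i - k - 1 < int (LEAST j. k + 1 + int j \<in> C)" using i unfolding nx_def by linarith
      then have "nat (i - k - 1) < (LEAST j. k + 1 + int j \<in> C)" using i by (simp add: nat_less_iff)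
      ultimately show "i \<notin> C" using not_less_Least by metis
    qed
    ultimately show ?thesis by blast
  qed
  have pv: "pv k \<in> C \<and> pv k < k \<and> (\<forall>i. pv k < i \<and> i < k \<longrightarrow> i \<notin> C)" for k
  proof -
    obtain c where c: "c \<in> C" "c \<le> k - 1" using unb by blast
    have ex: "\<exists>j. k - 1 - int j \<in> C"
      using c by (intro exI[of _ "nat (k - 1 - c)"]) simp
    have "pv k \<in> C" unfolding pv_def using LeastI_ex[OF ex] by simp
    moreover have "pv k < k" unfolding pv_def by simp
    moreover have "\<forall>i. pv k < i \<and> i < k \<longrightarrow> i \<notin> C"
    proof (intro allI impI)
      fix i assume i: "pv k < i \<and> i < k"
      then have "i = k - 1 - int (nat (k - 1 - i))" by simp
      moreover have "k - 1 - i < int (LEAST j. k - 1 - int j \<in> C)" using i unfolding pv_def by linarith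
      then have "nat (k - 1 - i) < (LEAST j. k - 1 - int j \<in> C)" using i by (simp add: nat_less_iff)
      ultimately show "i \<notin> C" using not_less_Least by metis
    qed
    ultimately show ?thesis by blast
  qed
  have nxpv: "nx (pv k) = k" if k: "k \<in> C" for k
  proof -
    have a: "pv k \<in> C" "pv k < k" "\<forall>i. pv k < i \<and> i < k \<longrightarrow> i \<notin> C" using pv[of k] by auto
    have b: "nx (pv k) \<in> C" "pv k < nx (pv k)" "\<forall>i. pv k < i \<and> i < nx (pv k) \<longrightarrow> i \<notin> C"
      using nx[OF a(1)] by auto
    have "\<not> nx (pv k) < k" using a b by blast
    moreover have "\<not> k < nx (pv k)" using a b k by blast
    ultimately show ?thesis by simp
  qed
  have nxw: "\<exists>w\<in>{W1, W2}. win f k w \<and> nx k = k + int (length w)" if k: "k \<in> C" for k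
  proof -
    obtain w where w: "w \<in> {W1, W2}" "blk f C k w" using blkC[OF k] by blast
    have wne: "w \<noteq> []" using w ne by auto
    have b: "nx k \<in> C" "k < nx k" "\<forall>i. k < i \<and> i < nx k \<longrightarrow> i \<notin> C" using nx[OF k] by auto
    have c: "k + int (length w) \<in> C" "\<forall>i. k < i \<and> i < k + int (length w) \<longrightarrow> i \<notin> C" "win f k w"
      using w(2) unfolding blk_def by auto
    have kk: "k < k + int (length w)" using wne by simp
    then have "\<not> nx k < k + int (length w)" using b c by blast
    moreover have "\<not> k + int (length w) < nx k" using b(3) c(1) kk by blast
    ultimately show ?thesis using w c by force
  qed
  define d0 where "d0 = pv 1"
  define d where "d j = (if 0 \<le> j then (nx ^^ nat j) d0 else (pv ^^ nat (- j)) d0)" for j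
  have d0C: "d0 \<in> C" using pv d0_def by blast
  have dC: "d j \<in> C" for j
  proof (cases "0 \<le> j")
    case True
    have "(nx ^^ k) d0 \<in> C" for k by (induction k) (use d0C nx in auto)
    then show ?thesis using True unfolding d_def by simp
  next
    case False
    then obtain k where k: "nat (- j) = Suc k" by (metis gr0_implies_Suc zero_less_nat_eq neg_0_less_iff_less not_le)
    then show ?thesis using False pv unfolding d_def by simp
  qed
  have dsucc: "d (j + 1) = nx (d j)" for j
  proof (cases "0 \<le> j")
    case True
    then have "nat (j + 1) = Suc (nat j)" by simp
    then show ?thesis using True unfolding d_def by simp
  next
    case False
    show ?thesis
    proof (cases "j = -1")
      case True
      then show ?thesis unfolding d_def using nxpv[OF d0C] by simp
    next
      case False2: False
      then have j1: "\<not> 0 \<le> j + 1" using False by simp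
      have e: "nat (- j) = Suc (nat (- (j + 1)))" using j1 by simp
      have "d j = pv (d (j + 1))" unfolding d_def using False j1 e by simp
      then show ?thesis using nxpv[OF dC[of "j + 1"]] by simp
    qed
  qed
  define z where "z j = map (\<lambda>i. f (d j + int i)) [0..<nat (d (j + 1) - d j)]" for j
  have "is_partition n \<alpha> f d z"
    unfolding is_partition_def
  proof (intro conjI allI)
    fix j show "d j < d (j + 1)" using dsucc nx dC by simp
  next
    fix j
    obtain w where w: "w \<in> {W1, W2}" "win f (d j) w" "nx (d j) = d j + int (length w)" using nxw[OF dC[of j]] by blast
    have "z j = w" using w unfolding z_def dsucc win_def by simp
    then show "z j \<in> {sword \<alpha> (int n), sword \<alpha> (int n - 1)}" using w W by simp
  next
    have "d 0 = pv 1" unfolding d_def d0_def by simp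
    moreover have "d 1 = nx (d 0)" using dsucc[of 0] by simp
    moreover have "pv 1 < nx (pv 1)" using nx pv by blast
    moreover have "\<not> (pv 1 < nx (pv 1) \<and> nx (pv 1) < 1)" using pv[of 1] nx[of "pv 1"] by blast
    ultimately show "0 \<in> {d 0..<d 1}" using pv[of 1] by auto
  next
    fix j show "map (\<lambda>i. f (d j + int i)) [0..<nat (d (j + 1) - d j)] = z j" unfolding z_def ..
  qed
  then show ?thesis by blast
qed

lemma cutset_unique_partition:
  assumes C: "cutset f W1 W2 C" and ne: "W1 \<noteq> []" "W2 \<noteq> []"
   and U: "\<forall>D. cutset f W1 W2 D \<longrightarrow> D = C"
   and W: "W1 = sword \<alpha> (int n)" "W2 = sword \<alpha> (int n - 1)"
  shows "\<exists>!p. is_partition n \<alpha> f (fst p) (snd p)"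
proof -
  obtain d z where dz: "is_partition n \<alpha> f d z" using cutset_exists_partition[OF C ne W] by blast
  have uniq: "p = q" if p: "is_partition n \<alpha> f (fst p) (snd p)" and q: "is_partition n \<alpha> f (fst q) (snd q)" for p q
  proof -
    have rp: "range (fst p) = C" using U partition_cutset[OF p] W by simp
    have rq: "range (fst q) = C" using U partition_cutset[OF q] W by simp
    have "fst p = fst q"
      by (rule same_range) (use p q rp rq in \<open>auto simp: is_partition_def\<close>)
    moreover have "snd p = snd q"
    proof
      fix j
      have "snd p j = map (\<lambda>i. f (fst p j + int i)) [0..<nat (fst p (j + 1) - fst p j)]"
        using p unfolding is_partition_def by simp
      also have "\<dots> = snd q j" using q \<open>fst p = fst q\<close> unfolding is_partition_def by simp
      finally show "snd p j = snd q j" .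
    qed
    ultimately show ?thesis by (simp add: prod_eq_iff)
  qed
  show ?thesis
  proof
    show "is_partition n \<alpha> f (fst (d, z)) (snd (d, z))" using dz by simp
  next
    fix p assume "is_partition n \<alpha> f (fst p) (snd p)"
    then show "p = (d, z)" using uniq[of p "(d, z)"] dz by simp
  qed
qed

declare of_nat_mult [simp del]

lemma blk_tiling:
  assumes "blk f D k w" "blk f D k' w'" "k \<in> D" "k' \<in> D"
    "k \<le> p" "p < k + int (length w)" "k' \<le> p" "p < k' + int (length w')"
  shows "k = k'"
proof (rule ccontr)
  assume "k \<noteq> k'"
  then consider "k < k'" | "k' < k" by linarith
  then show False
  proof cases
    case 1 then show False using assms unfolding blk_def by force
  next
    case 2 then show False using assms unfolding blk_def by force
  qed
qed

locale refine_ctx =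
  fixes f :: "int \<Rightarrow> nat" and wA wB :: "nat list" and m :: nat and D :: "int set"
  assumes neA: "wA \<noteq> []" and neB: "wB \<noteq> []" and m1: "1 \<le> m"
    and cut: "cutset f (concat (replicate m wA) @ wB) wA D"
begin

definition W where "W = concat (replicate m wA) @ wB"

lemma lenW: "length W = m * length wA + length wB"
  unfolding W_def by simp

lemma lenA_lt: "length wA < length W"
proof -
  have "1 * length wA \<le> m * length wA" using m1 by (rule mult_le_mono1)
  moreover have "0 < length wB" using neB by simp
  ultimately show ?thesis using lenW by linarith
qed

lemma W_ne: "W \<noteq> []" using lenA_lt by auto

lemma A_ne_W: "wA \<noteq> W" using lenA_lt by auto

definition R where
  "R = D \<union> {k + int (i * length wA) | k i. k \<in> D \<and> blk f D k W \<and> 1 \<le> i \<and> i \<le> m}"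

lemma D_sub_R: "D \<subseteq> R" unfolding R_def by blast

lemma cutD: "k \<in> D \<Longrightarrow> blk f D k W \<or> blk f D k wA"
  using cut unfolding cutset_def W_def by blast

lemma R_cases:
  assumes "x \<in> R"
  shows "x \<in> D \<or> (\<exists>k i. k \<in> D \<and> blk f D k W \<and> 1 \<le> i \<and> i \<le> m \<and> x = k + int (i * length wA))"
  using assms unfolding R_def by blast

lemma R_interior:
  assumes "k \<in> D" "blk f D k W" "i \<le> m"
  shows "k + int (i * length wA) \<in> R"
proof (cases "i = 0")
  case True then show ?thesis using assms D_sub_R by auto
next
  case False then show ?thesis unfolding R_def using assms by force
qed

lemma interior_pos:
  assumes "1 \<le> i" "i \<le> m"
  shows "k < k + int (i * length wA)" "k + int (i * length wA) < k + int (length W)"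
proof -
  have "0 < i * length wA" using assms neA by simp
  then show "k < k + int (i * length wA)" by simp
  have "i * length wA \<le> m * length wA" using assms(2) by (rule mult_le_mono1)
  moreover have "0 < length wB" using neB by simp
  ultimately have "i * length wA < length W" using lenW by linarith
  then show "k + int (i * length wA) < k + int (length W)" by simp
qed

lemma interior:
  assumes p: "p \<in> R" and k: "k \<in> D" and b: "blk f D k w" and w: "w = W \<or> w = wA"
    and kp: "k < p" "p < k + int (length w)"
  shows "w = W \<and> (\<exists>i. 1 \<le> i \<and> i \<le> m \<and> p = k + int (i * length wA))"
proof -
  have "p \<notin> D" using b kp unfolding blk_def by blast
  then obtain k'' i where h: "k'' \<in> D" "blk f D k'' W" "1 \<le> i" "i \<le> m" "p = k'' + int (i * length wA)"
    using R_cases[OF p] by blast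
  have "k'' < p" "p < k'' + int (length W)" using interior_pos[OF h(3,4), of k''] h(5) by auto
  then have "k = k''" by (intro blk_tiling[OF b h(2) k h(1), of p]) (use kp in auto)
  then have "w = W" using blk_unique[OF b] h(2) w neA W_ne by auto
  then show ?thesis using h \<open>k = k''\<close> by blast
qed

lemma win_W: "win f k W \<longleftrightarrow> (\<forall>j<m. win f (k + int (j * length wA)) wA) \<and> win f (k + int (m * length wA)) wB"
  unfolding W_def by (simp add: win_append win_rep)

lemma R_blk_W:
  assumes k: "k \<in> D" and b: "blk f D k W" and i: "i < m"
  shows "blk f R (k + int (i * length wA)) wA"
proof -
  have wi: "win f (k + int (i * length wA)) wA" using b i unfolding blk_def win_W by blast
  have nx: "k + int (i * length wA) + int (length wA) \<in> R"
  proof -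
    have "\<exists>k' i'. k + int (Suc i * length wA) = k' + int (i' * length wA) \<and> k' \<in> D \<and> blk f D k' W \<and> 1 \<le> i' \<and> i' \<le> m"
      by (rule exI[of _ k], rule exI[of _ "Suc i"]) (use k b i in simp)
    then have "k + int (Suc i * length wA) \<in> R" unfolding R_def by blast
    then show ?thesis by (simp add: algebra_simps)
  qed
  have btw: "\<forall>p. k + int (i * length wA) < p \<and> p < k + int (i * length wA) + int (length wA) \<longrightarrow> p \<notin> R"
  proof (intro allI impI)
    fix p assume a: "k + int (i * length wA) < p \<and> p < k + int (i * length wA) + int (length wA)"
    show "p \<notin> R"
    proof
      assume pR: "p \<in> R"
      have "Suc i * length wA \<le> m * length wA" using i by (intro mult_le_mono1) simp
      then have "i * length wA + length wA \<le> length W" using lenW by simp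
      then have "int (i * length wA) + int (length wA) \<le> int (length W)" by linarith
      then have "p < k + int (length W)" using a by linarith
      moreover have "k < p" using a by simp
      ultimately obtain i' where i': "1 \<le> i'" "i' \<le> m" "p = k + int (i' * length wA)"
        using interior[OF pR k b] by blast
      have "i * length wA < i' * length wA" using a i' by simp
      then have "i < i'" by simp
      moreover have "i' * length wA < Suc i * length wA" using a i' by simp
      then have "i' < Suc i" by (metis mult_less_cancel2)
      ultimately show False by simp
    qed
  qed
  show ?thesis unfolding blk_def using wi nx btw by blast
qed

lemma R_blk_B:
  assumes k: "k \<in> D" and b: "blk f D k W"
  shows "blk f R (k + int (m * length wA)) wB"
proof -
  have wi: "win f (k + int (m * length wA)) wB" using b unfolding blk_def win_W by blast
  have e: "k + int (m * length wA) + int (length wB) = k + int (length W)" using lenW by simp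
  have "k + int (length W) \<in> D" using b unfolding blk_def by blast
  then have nx: "k + int (m * length wA) + int (length wB) \<in> R"
    unfolding e using D_sub_R by blast
  have btw: "\<forall>p. k + int (m * length wA) < p \<and> p < k + int (m * length wA) + int (length wB) \<longrightarrow> p \<notin> R"
  proof (intro allI impI)
    fix p assume a: "k + int (m * length wA) < p \<and> p < k + int (m * length wA) + int (length wB)"
    show "p \<notin> R"
    proof
      assume pR: "p \<in> R"
      have "k < p" using a by simp
      moreover have "p < k + int (length W)" using a e by simp
      ultimately obtain i' where i': "1 \<le> i'" "i' \<le> m" "p = k + int (i' * length wA)"
        using interior[OF pR k b] by blast
      have "i' * length wA \<le> m * length wA" using i' by simp
      then show False using a i' by simp
    qed
  qed
  show ?thesis unfolding blk_def using wi nx btw by blast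
qed

lemma R_blk_A:
  assumes k: "k \<in> D" and b: "blk f D k wA"
  shows "blk f R k wA"
proof -
  have btw: "\<forall>p. k < p \<and> p < k + int (length wA) \<longrightarrow> p \<notin> R"
  proof (intro allI impI)
    fix p assume a: "k < p \<and> p < k + int (length wA)"
    show "p \<notin> R"
    proof
      assume pR: "p \<in> R"
      have "wA = W" using interior[OF pR k b] a by blast
      then show False using A_ne_W by simp
    qed
  qed
  show ?thesis using b D_sub_R btw unfolding blk_def by blast
qed

lemma R_cutset: "cutset f wA wB R"
  unfolding cutset_def
proof (intro conjI allI ballI)
  fix N
  obtain k where "k \<in> D" "k \<le> N" using cut unfolding cutset_def by blast
  then show "\<exists>k\<in>R. k \<le> N" using D_sub_R by blast
next
  fix x assume x: "x \<in> R"
  show "blk f R x wA \<or> blk f R x wB"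
  proof (cases "x \<in> D")
    case True
    then consider "blk f D x W" | "blk f D x wA" using cutD by blast
    then show ?thesis
    proof cases
      case 1 then show ?thesis using R_blk_W[OF True 1, of 0] m1 by simp
    next
      case 2 then show ?thesis using R_blk_A[OF True 2] by simp
    qed
  next
    case False
    then obtain k i where h: "k \<in> D" "blk f D k W" "1 \<le> i" "i \<le> m" "x = k + int (i * length wA)"
      using R_cases[OF x] by blast
    show ?thesis
    proof (cases "i < m")
      case True then show ?thesis using R_blk_W[OF h(1,2) True] h(5) by simp
    next
      case False then have "i = m" using h by simp
      then show ?thesis using R_blk_B[OF h(1,2)] h(5) by simp
    qed
  qed
qed

end

definition isB :: "real \<Rightarrow> real \<Rightarrow> real \<Rightarrow> bool" where
  "isB L \<rho> z \<longleftrightarrow> (if L < 2 * \<rho> then z < L - \<rho> else L - \<rho> \<le> z)"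

definition rot :: "real \<Rightarrow> real \<Rightarrow> real \<Rightarrow> real" where
  "rot L \<rho> z = (if z + \<rho> < L then z + \<rho> else z + \<rho> - L)"

definition ratio :: "real \<Rightarrow> real \<Rightarrow> real" where
  "ratio L \<rho> = (if L < 2 * \<rho> then (L - \<rho>) / \<rho> else \<rho> / (L - \<rho>))"

locale gls =
  fixes f :: "int \<Rightarrow> nat" and C :: "int set" and Z :: "int \<Rightarrow> real" and L \<rho> :: real
    and wA wB :: "nat list"
  assumes rho_pos: "0 < \<rho>" and rho_lt: "\<rho> < L" and irr: "\<rho> / (L - \<rho>) \<notin> \<rat>"
    and neA: "wA \<noteq> []" and neB: "wB \<noteq> []" and AB: "wA \<noteq> wB"
    and Zr: "k \<in> C \<Longrightarrow> 0 \<le> Z k \<and> Z k < L"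
    and blkC: "k \<in> C \<Longrightarrow> blk f C k (if isB L \<rho> (Z k) then wB else wA)"
    and Zrot: "k \<in> C \<Longrightarrow> Z (k + int (length (if isB L \<rho> (Z k) then wB else wA))) = rot L \<rho> (Z k)"
    and unb: "\<exists>k\<in>C. k \<le> N"
    and uniq: "cutset f wA wB D \<Longrightarrow> D = C"
begin

definition \<delta> where "\<delta> = (if L < 2 * \<rho> then - (L - \<rho>) else \<rho>)"

lemma cutC: "cutset f wA wB C"
  unfolding cutset_def using unb blkC by (metis (full_types))

lemma not_half: "L \<noteq> 2 * \<rho>"
proof
  assume "L = 2 * \<rho>"
  then have "\<rho> / (L - \<rho>) = 1" using rho_pos by simp
  then show False using irr by simp
qed

lemma A_step:
  assumes k: "k \<in> C" and nb: "\<not> isB L \<rho> (Z k)"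
  shows "blk f C k wA \<and> k + int (length wA) \<in> C \<and> Z (k + int (length wA)) = Z k + \<delta>"
proof -
  have b: "blk f C k wA" using blkC[OF k] nb by simp
  moreover have "k + int (length wA) \<in> C" using b unfolding blk_def by blast
  moreover have "Z (k + int (length wA)) = rot L \<rho> (Z k)" using Zrot[OF k] nb by simp
  moreover have "rot L \<rho> (Z k) = Z k + \<delta>"
    using nb Zr[OF k] rho_pos unfolding rot_def \<delta>_def isB_def by (auto split: if_splits)
  ultimately show ?thesis by simp
qed

lemma B_step:
  assumes k: "k \<in> C" and b: "isB L \<rho> (Z k)"
  shows "blk f C k wB \<and> k + int (length wB) \<in> C \<and> Z (k + int (length wB)) = rot L \<rho> (Z k)"
proof -
  have bb: "blk f C k wB" using blkC[OF k] b by simp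
  then show ?thesis using Zrot[OF k] b unfolding blk_def by simp
qed

lemma blk_type:
  assumes k: "k \<in> C" and b: "blk f C k w" and w: "w = wA \<or> w = wB"
  shows "(w = wA \<longleftrightarrow> \<not> isB L \<rho> (Z k)) \<and> (w = wB \<longleftrightarrow> isB L \<rho> (Z k))"
proof -
  have "w = (if isB L \<rho> (Z k) then wB else wA)"
    using blk_unique[OF b blkC[OF k]] w neA neB by auto
  then show ?thesis using AB by auto
qed

lemma chain:
  assumes k: "k \<in> C" and h: "\<forall>j<i. \<not> isB L \<rho> (Z k + real j * \<delta>)"
  shows "k + int (i * length wA) \<in> C \<and> Z (k + int (i * length wA)) = Z k + real i * \<delta>
    \<and> win f k (concat (replicate i wA))
    \<and> (\<forall>x\<in>C. k \<le> x \<and> x < k + int (i * length wA) \<longrightarrow> (\<exists>j<i. x = k + int (j * length wA)))"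
  using h
proof (induction i)
  case 0 then show ?case using k by (simp add: win_def)
next
  case (Suc i)
  then have IH: "k + int (i * length wA) \<in> C" "Z (k + int (i * length wA)) = Z k + real i * \<delta>"
    "win f k (concat (replicate i wA))"
    "\<forall>x\<in>C. k \<le> x \<and> x < k + int (i * length wA) \<longrightarrow> (\<exists>j<i. x = k + int (j * length wA))"
    by auto
  have nb: "\<not> isB L \<rho> (Z (k + int (i * length wA)))" using Suc.prems IH(2) by simp
  note st = A_step[OF IH(1) nb]
  have e: "k + int (Suc i * length wA) = k + int (i * length wA) + int (length wA)"
    by (simp add: of_nat_mult algebra_simps)
  have "k + int (Suc i * length wA) \<in> C" unfolding e using st by blast
  moreover have "Z (k + int (Suc i * length wA)) = Z k + real (Suc i) * \<delta>"
    unfolding e using st IH(2) by (simp add: algebra_simps)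
  moreover have "win f k (concat (replicate (Suc i) wA))"
  proof -
    have "concat (replicate (Suc i) wA) = concat (replicate i wA) @ wA"
      by (simp add: replicate_append_same[symmetric])
    moreover have "win f (k + int (length (concat (replicate i wA)))) wA"
      using st unfolding blk_def by simp
    ultimately show ?thesis using IH(3) by (simp add: win_append)
  qed
  moreover have "\<forall>x\<in>C. k \<le> x \<and> x < k + int (Suc i * length wA) \<longrightarrow> (\<exists>j<Suc i. x = k + int (j * length wA))"
  proof (intro ballI impI)
    fix x assume x: "x \<in> C" and a: "k \<le> x \<and> x < k + int (Suc i * length wA)"
    show "\<exists>j<Suc i. x = k + int (j * length wA)"
    proof (cases "x < k + int (i * length wA)")
      case True then show ?thesis using IH(4) x a less_Suc_eq by blast
    next
      case False
      have "\<not> (k + int (i * length wA) < x \<and> x < k + int (i * length wA) + int (length wA))"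
        using st x unfolding blk_def by blast
      then have "x = k + int (i * length wA)" using False a e by linarith
      then show ?thesis by blast
    qed
  qed
  ultimately show ?case by blast
qed

lemma chain_rev:
  assumes k: "k \<in> C" and h: "\<forall>j<i. \<not> isB L \<rho> (Z (k + int (j * length wA)))"
  shows "\<forall>j<i. \<not> isB L \<rho> (Z k + real j * \<delta>)"
  using h
proof (induction i)
  case 0 then show ?case by simp
next
  case (Suc i)
  then have IH: "\<forall>j<i. \<not> isB L \<rho> (Z k + real j * \<delta>)" by simp
  have "Z (k + int (i * length wA)) = Z k + real i * \<delta>" using chain[OF k IH] by blast
  then have "\<not> isB L \<rho> (Z k + real i * \<delta>)" using Suc.prems by (metis lessI)
  then show ?case using IH less_Suc_eq by auto
qed

lemma to_B:
  assumes k: "k \<in> C" and ex: "isB L \<rho> (Z k + real i * \<delta>)"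
  shows "\<exists>i0\<le>i. k + int (i0 * length wA) \<in> C \<and> isB L \<rho> (Z k + real i0 * \<delta>)
     \<and> Z (k + int (i0 * length wA)) = Z k + real i0 * \<delta>
     \<and> k + int (i0 * length wA) + int (length wB) \<in> C
     \<and> Z (k + int (i0 * length wA) + int (length wB)) = rot L \<rho> (Z k + real i0 * \<delta>)"
proof -
  obtain i0 where i0: "isB L \<rho> (Z k + real i0 * \<delta>)" "\<forall>j<i0. \<not> isB L \<rho> (Z k + real j * \<delta>)"
    using ex exists_least_iff[of "\<lambda>i. isB L \<rho> (Z k + real i * \<delta>)"] by blast
  have le: "i0 \<le> i" using i0(2) ex not_le by blast
  note c = chain[OF k i0(2)]
  have bb: "isB L \<rho> (Z (k + int (i0 * length wA)))" using c i0(1) by simp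
  note bs = B_step[OF conjunct1[OF c] bb]
  show ?thesis using le c bs i0(1) by (intro exI[of _ i0]) simp
qed

end

context gls begin

lemma trans_plus:
  assumes F: "L < 2 * \<rho>"
  shows "\<exists>C' Z' L' \<rho>'. gls f C' Z' L' \<rho>' (concat (replicate (nat \<lfloor>\<rho> / (L - \<rho>)\<rfloor>) wA) @ wB) wA
     \<and> ratio L' \<rho>' = frac (\<rho> / (L - \<rho>))"
proof -
  define s where "s = L - \<rho>"
  define m where "m = nat \<lfloor>\<rho> / s\<rfloor>"
  have s0: "0 < s" using rho_lt s_def by simp
  have sr: "s < \<rho>" using F s_def by simp
  have q: "\<rho> / s \<notin> \<rat>" using irr s_def by simp
  have fl0: "0 \<le> \<lfloor>\<rho> / s\<rfloor>" using s0 rho_pos by simp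
  have mq: "real m = real_of_int \<lfloor>\<rho> / s\<rfloor>" using fl0 m_def by simp
  have m_le: "real m \<le> \<rho> / s" using mq by linarith
  have m_lt1: "\<rho> / s < real m + 1" using mq by linarith
  have m_ne: "real m \<noteq> \<rho> / s" using q Rats_of_nat by metis
  have m_lt: "real m < \<rho> / s" using m_le m_ne by simp
  have ms_lt: "real m * s < \<rho>" using m_lt s0 by (simp add: field_simps)
  have ms_gt: "\<rho> < (real m + 1) * s" using m_lt1 s0 by (simp add: field_simps)
  have "1 < \<rho> / s" using sr s0 by simp
  then have m1: "1 \<le> m" using m_lt1 by linarith
  have ms_ge: "s \<le> real m * s" using m1 s0 by simp
  have dl: "\<delta> = - s" unfolding \<delta>_def s_def using F by simp
  have isB_iff: "isB L \<rho> z \<longleftrightarrow> z < s" for z unfolding isB_def s_def using F by simp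
  define C' where "C' = {k \<in> C. real m * s \<le> Z k}"
  define Z' where "Z' = (\<lambda>k. Z k - real m * s)"
  define L' where "L' = L - real m * s"
  define \<rho>' where "\<rho>' = \<rho> - real m * s"
  define W where "W = concat (replicate m wA) @ wB"
  have L'e: "L' = s + \<rho>'" unfolding L'_def \<rho>'_def s_def by simp
  have r'pos: "0 < \<rho>'" unfolding \<rho>'_def using ms_lt by simp
  have r's: "\<rho>' < s" unfolding \<rho>'_def using ms_gt by (simp add: algebra_simps)
  have isB'_iff: "isB L' \<rho>' z \<longleftrightarrow> s \<le> z" for z unfolding isB_def using L'e r's by simp
  have lenW: "length W = m * length wA + length wB" unfolding W_def by simp
  have C'C: "C' \<subseteq> C" unfolding C'_def by blast
  have main: "blk f C' k (if isB L' \<rho>' (Z' k) then wA else W)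
      \<and> Z' (k + int (length (if isB L' \<rho>' (Z' k) then wA else W))) = rot L' \<rho>' (Z' k)" if kC': "k \<in> C'" for k
  proof -
    have kC: "k \<in> C" and zk: "real m * s \<le> Z k" using kC' unfolding C'_def by auto
    have zr: "0 \<le> Z k" "Z k < L" using Zr[OF kC] by auto
    show ?thesis
    proof (cases "(real m + 1) * s \<le> Z k")
      case True
      have b': "isB L' \<rho>' (Z' k)" unfolding isB'_iff Z'_def using True by (simp add: algebra_simps)
      have nb: "\<not> isB L \<rho> (Z k)" unfolding isB_iff using True ms_ge s0 distrib_right[of "real m" 1 s] by linarith
      note st = A_step[OF kC nb]
      have yC': "k + int (length wA) \<in> C'" unfolding C'_def using st True dl by (simp add: algebra_simps)
      have "blk f C' k wA" using st yC' C'C unfolding blk_def by blast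
      moreover have "Z' (k + int (length wA)) = rot L' \<rho>' (Z' k)"
        using st dl True L'e unfolding rot_def Z'_def by (simp add: algebra_simps)
      ultimately show ?thesis using b' by simp
    next
      case False
      then have zk2: "Z k < (real m + 1) * s" by simp
      have nb': "\<not> isB L' \<rho>' (Z' k)" unfolding isB'_iff Z'_def using zk2 by (simp add: algebra_simps)
      have h: "\<forall>j<m. \<not> isB L \<rho> (Z k + real j * \<delta>)"
      proof (intro allI impI)
        fix j assume j: "j < m"
        then have "real j + 1 \<le> real m" by simp
        then have "(real j + 1) * s \<le> real m * s" using s0 by (intro mult_right_mono) auto
        then show "\<not> isB L \<rho> (Z k + real j * \<delta>)" unfolding isB_iff dl using zk by (simp add: algebra_simps)
      qed
      note c = chain[OF kC h]
      define xm where "xm = k + int (m * length wA)"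
      have xmC: "xm \<in> C" and zxm: "Z xm = Z k - real m * s" using c dl unfolding xm_def by auto
      have bxm: "isB L \<rho> (Z xm)" unfolding isB_iff zxm using zk2 by (simp add: algebra_simps)
      note bs = B_step[OF xmC bxm]
      have rotxm: "rot L \<rho> (Z xm) = Z xm + \<rho>" unfolding rot_def using bxm isB_iff s_def by simp
      have ye: "k + int (length W) = xm + int (length wB)" unfolding xm_def lenW by simp
      have yC: "k + int (length W) \<in> C" using bs ye by simp
      have zy: "Z (k + int (length W)) = Z k - real m * s + \<rho>" using bs ye rotxm zxm by simp
      have "real m * s \<le> Z k - real m * s + \<rho>" using zk ms_lt by linarith
      then have yC': "k + int (length W) \<in> C'" unfolding C'_def using yC zy by simp
      have win: "win f k W"
      proof -
        have "win f (k + int (length (concat (replicate m wA)))) wB" using bs unfolding blk_def xm_def by simp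
        then show ?thesis unfolding W_def using c by (simp add: win_append)
      qed
      have btw: "\<forall>x. k < x \<and> x < k + int (length W) \<longrightarrow> x \<notin> C'"
      proof (intro allI impI notI)
        fix x assume a: "k < x \<and> x < k + int (length W)" and xC': "x \<in> C'"
        have xC: "x \<in> C" and zx: "real m * s \<le> Z x" using xC' unfolding C'_def by auto
        consider "x < xm" | "x = xm" | "xm < x" by linarith
        then show False
        proof cases
          case 1
          then obtain j where j: "j < m" "x = k + int (j * length wA)" using c xC a unfolding xm_def by force
          have "j \<noteq> 0" using j a by auto
          then have j1: "1 \<le> real j" by simp
          have hj: "\<forall>i<j. \<not> isB L \<rho> (Z k + real i * \<delta>)" using h j by simp
          have "Z x = Z k - real j * s" using chain[OF kC hj] j dl by simp
          moreover have "s \<le> real j * s" using j1 s0 by simp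
          ultimately show False using zx zk2 by (simp add: algebra_simps)
        next
          case 2
          have "Z x < s" using bxm isB_iff 2 by simp
          then show False using zx ms_ge by linarith
        next
          case 3
          have "x < xm + int (length wB)" using a ye by simp
          then show False using bs 3 xC unfolding blk_def by blast
        qed
      qed
      have "blk f C' k W" unfolding blk_def using win yC' btw by blast
      moreover have "Z' (k + int (length W)) = rot L' \<rho>' (Z' k)"
        unfolding Z'_def rot_def zy using zk2 L'e \<rho>'_def by (simp add: algebra_simps)
      ultimately show ?thesis using nb' by simp
    qed
  qed
  have unb': "\<exists>k\<in>C'. k \<le> N" for N
  proof -
    obtain k where kC: "k \<in> C" and kN: "k \<le> N - int (m * length wA + length wB)" using unb by blast
    show ?thesis
    proof (cases "real m * s \<le> Z k")
      case True then show ?thesis using kC kN unfolding C'_def by force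
    next
      case False
      have "isB L \<rho> (Z k + real (m - 1) * \<delta>)"
      proof -
        have "real (m - 1) = real m - 1" using m1 by simp
        then show ?thesis unfolding isB_iff dl using False by (simp add: algebra_simps)
      qed
      then obtain i0 where i0: "i0 \<le> m - 1" "k + int (i0 * length wA) \<in> C" "isB L \<rho> (Z k + real i0 * \<delta>)"
        "Z (k + int (i0 * length wA)) = Z k + real i0 * \<delta>"
        "k + int (i0 * length wA) + int (length wB) \<in> C"
        "Z (k + int (i0 * length wA) + int (length wB)) = rot L \<rho> (Z k + real i0 * \<delta>)"
        using to_B[OF kC] by blast
      define y where "y = k + int (i0 * length wA) + int (length wB)"
      have z0: "0 \<le> Z k + real i0 * \<delta>" using Zr[OF i0(2)] i0(4) by simp
      have "rot L \<rho> (Z k + real i0 * \<delta>) = Z k + real i0 * \<delta> + \<rho>"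
        unfolding rot_def using i0(3) isB_iff s_def by simp
      then have "real m * s \<le> Z y" using i0(6) z0 ms_lt unfolding y_def by simp
      then have yC': "y \<in> C'" unfolding C'_def y_def using i0(5) by simp
      have "i0 \<le> m" using i0(1) by linarith
      then have "i0 * length wA \<le> m * length wA" by (rule mult_le_mono1)
      then have "y \<le> N" using kN unfolding y_def by linarith
      then show ?thesis using yC' by blast
    qed
  qed
  have uniq': "D = C'" if cD: "cutset f W wA D" for D
  proof -
    interpret r: refine_ctx f wA wB m D
      using neA neB m1 cD unfolding W_def by unfold_locales auto
    have RW: "r.W = W" unfolding r.W_def W_def ..
    have RC: "r.R = C" using uniq[OF r.R_cutset] .
    have DC: "D \<subseteq> C" using r.D_sub_R RC by blast
    have Wchain: "(\<forall>j\<le>m. Z (k + int (j * length wA)) = Z k - real j * s) \<and> isB L \<rho> (Z (k + int (m * length wA)))"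
      if kD: "k \<in> D" and bW: "blk f D k W" for k
    proof -
      have kC: "k \<in> C" using kD DC by blast
      have bW': "blk f D k r.W" using bW RW by simp
      have nbj: "\<forall>j<m. \<not> isB L \<rho> (Z (k + int (j * length wA)))"
      proof (intro allI impI)
        fix j assume j: "j < m"
        have "blk f C (k + int (j * length wA)) wA" using r.R_blk_W[OF kD bW' j] RC by simp
        moreover have "k + int (j * length wA) \<in> C" using r.R_interior[OF kD bW'] j RC by simp
        ultimately show "\<not> isB L \<rho> (Z (k + int (j * length wA)))" using blk_type by blast
      qed
      have hh: "\<forall>j<m. \<not> isB L \<rho> (Z k + real j * \<delta>)" using chain_rev[OF kC nbj] .
      have zz: "\<forall>j\<le>m. Z (k + int (j * length wA)) = Z k - real j * s"
      proof (intro allI impI)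
        fix j assume "j \<le> m"
        then have "\<forall>i<j. \<not> isB L \<rho> (Z k + real i * \<delta>)" using hh by simp
        then show "Z (k + int (j * length wA)) = Z k - real j * s" using chain[OF kC] dl by simp
      qed
      have "blk f C (k + int (m * length wA)) wB" using r.R_blk_B[OF kD bW'] RC by simp
      moreover have "k + int (m * length wA) \<in> C" using r.R_interior[OF kD bW'] RC by simp
      ultimately have "isB L \<rho> (Z (k + int (m * length wA)))" using blk_type by blast
      then show ?thesis using zz by blast
    qed
    have Q: "\<forall>x\<in>D. Z x < real j * s \<longrightarrow> real m * s \<le> Z x" for j
    proof (induction j)
      case 0 then show ?case using DC Zr by force
    next
      case (Suc j)
      show ?case
      proof (intro ballI impI)
        fix x assume xD: "x \<in> D" and zx: "Z x < real (Suc j) * s"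
        have xC: "x \<in> C" using xD DC by blast
        consider "blk f D x W" | "blk f D x wA" using r.cutD xD RW by auto
        then show "real m * s \<le> Z x"
        proof cases
          case 1
          note wc = Wchain[OF xD 1]
          have "m - 1 < m" using m1 by simp
          have nb: "\<not> isB L \<rho> (Z (x + int ((m - 1) * length wA)))"
          proof -
            have bW': "blk f D x r.W" using 1 RW by simp
            have "blk f C (x + int ((m - 1) * length wA)) wA" using r.R_blk_W[OF xD bW' \<open>m - 1 < m\<close>] RC by simp
            moreover have "x + int ((m - 1) * length wA) \<in> C" using r.R_interior[OF xD bW', of "m - 1"] RC by simp
            ultimately show ?thesis using blk_type by blast
          qed
          have "Z (x + int ((m - 1) * length wA)) = Z x - real (m - 1) * s" using wc by simp
          moreover have "real (m - 1) = real m - 1" using m1 by simp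
          ultimately show ?thesis using nb unfolding isB_iff by (simp add: algebra_simps)
        next
          case 2
          have "blk f C x wA" using r.R_blk_A[OF xD 2] RC by simp
          then have nb: "\<not> isB L \<rho> (Z x)" using blk_type xC by blast
          have yD: "x + int (length wA) \<in> D" using 2 unfolding blk_def by blast
          have zy: "Z (x + int (length wA)) = Z x - s" using A_step[OF xC nb] dl by simp
          have "Z (x + int (length wA)) < real j * s" using zy zx by (simp add: algebra_simps)
          then have "real m * s \<le> Z (x + int (length wA))" using Suc.IH yD by blast
          then show ?thesis using zy s0 by simp
        qed
      qed
    qed
    have sub: "D \<subseteq> C'"
    proof
      fix x assume xD: "x \<in> D"
      obtain j where "Z x < real j * s" using ex_less_of_nat_mult[OF s0] by blast
      then have "real m * s \<le> Z x" using Q xD by blast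
      then show "x \<in> C'" unfolding C'_def using xD DC by blast
    qed
    have sup: "C' \<subseteq> D"
    proof
      fix c assume cC': "c \<in> C'"
      have cR: "c \<in> r.R" using cC' RC unfolding C'_def by blast
      show "c \<in> D"
      proof (rule ccontr)
        assume "c \<notin> D"
        then obtain k i where h: "k \<in> D" "blk f D k r.W" "1 \<le> i" "i \<le> m" "c = k + int (i * length wA)"
          using r.R_cases[OF cR] by blast
        have bW: "blk f D k W" using h(2) RW by simp
        note wc = Wchain[OF h(1) bW]
        have zc: "Z c = Z k - real i * s" using wc h by simp
        have "Z k - real m * s < s" using wc isB_iff by (metis order_refl)
        moreover have "real m * s \<le> Z c" using cC' unfolding C'_def by simp
        moreover have "s \<le> real i * s" using h(3) s0 by simp
        ultimately show False using zc by (simp add: algebra_simps)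
      qed
    qed
    show ?thesis using sub sup by blast
  qed
  have G: "gls f {k \<in> C. real m * s \<le> Z k} (\<lambda>k. Z k - real m * s) (L - real m * s) (\<rho> - real m * s)
           (concat (replicate m wA) @ wB) wA"
  proof (rule gls.intro)
    show "0 < \<rho> - real m * s" using r'pos \<rho>'_def by simp
    show "\<rho> - real m * s < L - real m * s" using rho_lt by simp
    have "(\<rho> - real m * s) / (L - real m * s - (\<rho> - real m * s)) = \<rho> / s - real m"
      using s0 unfolding s_def by (simp add: field_simps)
    moreover have "\<rho> / s - real m \<notin> \<rat>"
    proof
      assume "\<rho> / s - real m \<in> \<rat>"
      then have "\<rho> / s - real m + real m \<in> \<rat>" using Rats_add Rats_of_nat by blast
      then show False using q by simp
    qed
    ultimately show "(\<rho> - real m * s) / (L - real m * s - (\<rho> - real m * s)) \<notin> \<rat>" by simp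
    show "concat (replicate m wA) @ wB \<noteq> []" using neB by simp
    show "wA \<noteq> []" by (rule neA)
    show "concat (replicate m wA) @ wB \<noteq> wA"
    proof
      assume "concat (replicate m wA) @ wB = wA"
      then have a: "m * length wA + length wB = length wA" by (metis length_append len_concat_rep)
      have b: "1 * length wA \<le> m * length wA" using m1 by (rule mult_le_mono1)
      have c: "0 < length wB" using neB by simp
      show False using a b c by linarith
    qed
  next
    fix k assume "k \<in> {k \<in> C. real m * s \<le> Z k}"
    then show "0 \<le> Z k - real m * s \<and> Z k - real m * s < L - real m * s" using Zr by auto
  next
    fix k assume "k \<in> {k \<in> C. real m * s \<le> Z k}"
    then show "blk f {k \<in> C. real m * s \<le> Z k} k
       (if isB (L - real m * s) (\<rho> - real m * s) (Z k - real m * s) then wA else concat (replicate m wA) @ wB)"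
      using main[of k] unfolding C'_def Z'_def L'_def \<rho>'_def W_def by simp
  next
    fix k assume "k \<in> {k \<in> C. real m * s \<le> Z k}"
    then show "Z (k + int (length (if isB (L - real m * s) (\<rho> - real m * s) (Z k - real m * s) then wA else concat (replicate m wA) @ wB))) -
          real m * s = rot (L - real m * s) (\<rho> - real m * s) (Z k - real m * s)"
      using main[of k] unfolding C'_def Z'_def L'_def \<rho>'_def W_def by simp
  next
    fix N show "\<exists>k\<in>{k \<in> C. real m * s \<le> Z k}. k \<le> N" using unb' unfolding C'_def by simp
  next
    fix D assume "cutset f (concat (replicate m wA) @ wB) wA D"
    then show "D = {k \<in> C. real m * s \<le> Z k}" using uniq' unfolding C'_def W_def by simp
  qed
  have "ratio (L - real m * s) (\<rho> - real m * s) = \<rho> / s - real m"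
    unfolding ratio_def using s0 r's L'e unfolding s_def \<rho>'_def L'_def by (auto simp: field_simps)
  also have "\<dots> = frac (\<rho> / s)" unfolding frac_def using mq by simp
  finally show ?thesis using G unfolding m_def s_def by blast
qed

end

context gls begin

lemma trans_minus:
  assumes F: "\<not> L < 2 * \<rho>"
  shows "\<exists>C' Z' L' \<rho>'. gls f C' Z' L' \<rho>' (concat (replicate (nat \<lfloor>(L - \<rho>) / \<rho>\<rfloor>) wA) @ wB) wA
     \<and> ratio L' \<rho>' = frac ((L - \<rho>) / \<rho>)"
proof -
  define t where "t = \<rho>"
  define m where "m = nat \<lfloor>(L - t) / t\<rfloor>"
  have F2: "2 * \<rho> < L" using F not_half by simp
  have t0: "0 < t" using rho_pos t_def by simp
  have tl: "t < L - t" using F2 t_def by simp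
  have q: "(L - t) / t \<notin> \<rat>"
  proof
    assume "(L - t) / t \<in> \<rat>"
    then have "inverse ((L - t) / t) \<in> \<rat>" by (rule Rats_inverse)
    moreover have "inverse ((L - t) / t) = \<rho> / (L - \<rho>)" unfolding t_def by simp
    ultimately show False using irr by simp
  qed
  have fl0: "0 \<le> \<lfloor>(L - t) / t\<rfloor>" using t0 tl by simp
  have mq: "real m = real_of_int \<lfloor>(L - t) / t\<rfloor>" using fl0 m_def by simp
  have m_le: "real m \<le> (L - t) / t" using mq by linarith
  have m_lt1: "(L - t) / t < real m + 1" using mq by linarith
  have m_ne: "real m \<noteq> (L - t) / t" using q Rats_of_nat by metis
  have m_lt: "real m < (L - t) / t" using m_le m_ne by simp
  have mt_lt: "real m * t < L - t" using m_lt t0 by (simp add: field_simps)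
  have mt_gt: "L - t < (real m + 1) * t" using m_lt1 t0 by (simp add: field_simps)
  have "1 < (L - t) / t" using tl t0 by simp
  then have m1: "1 \<le> m" using m_lt1 by linarith
  have mt_ge: "t \<le> real m * t" using m1 t0 by simp
  have dl: "\<delta> = t" unfolding \<delta>_def t_def using F by simp
  have isB_iff: "isB L \<rho> z \<longleftrightarrow> L - t \<le> z" for z unfolding isB_def t_def using F by simp
  define u where "u = L - (real m + 1) * t"
  have u0: "0 < u" unfolding u_def using mt_lt by (simp add: algebra_simps)
  have ut: "u < t" unfolding u_def using mt_gt by (simp add: algebra_simps)
  define C' where "C' = {k \<in> C. Z k < L - real m * t}"
  define L' where "L' = L - real m * t"
  define W where "W = concat (replicate m wA) @ wB"
  have L'e: "L' = u + t" unfolding L'_def u_def by (simp add: algebra_simps)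
  have isB'_iff: "isB L' t z \<longleftrightarrow> z < u" for z unfolding isB_def using L'e ut by simp
  have lenW: "length W = m * length wA + length wB" unfolding W_def by simp
  have C'C: "C' \<subseteq> C" unfolding C'_def by blast
  have main: "blk f C' k (if isB L' t (Z k) then wA else W)
      \<and> Z (k + int (length (if isB L' t (Z k) then wA else W))) = rot L' t (Z k)" if kC': "k \<in> C'" for k
  proof -
    have kC: "k \<in> C" and zk: "Z k < L - real m * t" using kC' unfolding C'_def by auto
    have zr: "0 \<le> Z k" "Z k < L" using Zr[OF kC] by auto
    show ?thesis
    proof (cases "Z k < u")
      case True
      have b': "isB L' t (Z k)" unfolding isB'_iff using True by simp
      have nb: "\<not> isB L \<rho> (Z k)" unfolding isB_iff using True u_def mt_ge t0 distrib_right[of "real m" 1 t] by linarith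
      note st = A_step[OF kC nb]
      have "Z k + t < L - real m * t" using True u_def by (simp add: algebra_simps)
      then have yC': "k + int (length wA) \<in> C'" unfolding C'_def using st dl by simp
      have "blk f C' k wA" using st yC' C'C unfolding blk_def by blast
      moreover have "Z (k + int (length wA)) = rot L' t (Z k)"
        using st dl True L'e unfolding rot_def by simp
      ultimately show ?thesis using b' by simp
    next
      case False
      then have zk2: "u \<le> Z k" by simp
      have nb': "\<not> isB L' t (Z k)" unfolding isB'_iff using zk2 by simp
      have h: "\<forall>j<m. \<not> isB L \<rho> (Z k + real j * \<delta>)"
      proof (intro allI impI)
        fix j assume j: "j < m"
        then have "real j + 1 \<le> real m" by simp
        then have "(real j + 1) * t \<le> real m * t" using t0 by (intro mult_right_mono) auto
        then show "\<not> isB L \<rho> (Z k + real j * \<delta>)" unfolding isB_iff dl using zk by (simp add: algebra_simps)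
      qed
      note c = chain[OF kC h]
      define xm where "xm = k + int (m * length wA)"
      have xmC: "xm \<in> C" and zxm: "Z xm = Z k + real m * t" using c dl unfolding xm_def by auto
      have bxm: "isB L \<rho> (Z xm)" unfolding isB_iff zxm using zk2 u_def by (simp add: algebra_simps)
      note bs = B_step[OF xmC bxm]
      have zxmL: "Z xm < L" using Zr[OF xmC] by simp
      have rotxm: "rot L \<rho> (Z xm) = Z xm + t - L" unfolding rot_def using bxm isB_iff t_def by simp
      have ye: "k + int (length W) = xm + int (length wB)" unfolding xm_def lenW by simp
      have yC: "k + int (length W) \<in> C" using bs ye by simp
      have zy: "Z (k + int (length W)) = Z k + real m * t + t - L" using bs ye rotxm zxm by simp
      have "Z k + real m * t + t - L < L - real m * t" using zxm zxmL u0 u_def by (simp add: algebra_simps)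
      then have yC': "k + int (length W) \<in> C'" unfolding C'_def using yC zy by simp
      have win: "win f k W"
      proof -
        have "win f (k + int (length (concat (replicate m wA)))) wB" using bs unfolding blk_def xm_def by simp
        then show ?thesis unfolding W_def using c by (simp add: win_append)
      qed
      have btw: "\<forall>x. k < x \<and> x < k + int (length W) \<longrightarrow> x \<notin> C'"
      proof (intro allI impI notI)
        fix x assume a: "k < x \<and> x < k + int (length W)" and xC': "x \<in> C'"
        have xC: "x \<in> C" and zx: "Z x < L - real m * t" using xC' unfolding C'_def by auto
        consider "x < xm" | "x = xm" | "xm < x" by linarith
        then show False
        proof cases
          case 1
          then obtain j where j: "j < m" "x = k + int (j * length wA)" using c xC a unfolding xm_def by force
          have "j \<noteq> 0" using j a by auto
          then have j1: "1 \<le> real j" by simp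
          have hj: "\<forall>i<j. \<not> isB L \<rho> (Z k + real i * \<delta>)" using h j by simp
          have "Z x = Z k + real j * t" using chain[OF kC hj] j dl by simp
          moreover have "t \<le> real j * t" using j1 t0 by simp
          ultimately show False using zx zk2 u_def by (simp add: algebra_simps)
        next
          case 2
          have "L - t \<le> Z x" using bxm isB_iff 2 by simp
          then show False using zx mt_ge by linarith
        next
          case 3
          have "x < xm + int (length wB)" using a ye by simp
          then show False using bs 3 xC unfolding blk_def by blast
        qed
      qed
      have "blk f C' k W" unfolding blk_def using win yC' btw by blast
      moreover have "Z (k + int (length W)) = rot L' t (Z k)"
        unfolding rot_def zy using zk2 L'e L'_def by (simp add: algebra_simps)
      ultimately show ?thesis using nb' by simp
    qed
  qed
  have unb': "\<exists>k\<in>C'. k \<le> N" for N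
  proof -
    obtain k where kC: "k \<in> C" and kN: "k \<le> N - int (m * length wA + length wB)" using unb by blast
    show ?thesis
    proof (cases "Z k < L - real m * t")
      case True then show ?thesis using kC kN unfolding C'_def by force
    next
      case False
      have "isB L \<rho> (Z k + real (m - 1) * \<delta>)"
      proof -
        have "real (m - 1) = real m - 1" using m1 by simp
        then show ?thesis unfolding isB_iff dl using False by (simp add: algebra_simps)
      qed
      then obtain i0 where i0: "i0 \<le> m - 1" "k + int (i0 * length wA) \<in> C" "isB L \<rho> (Z k + real i0 * \<delta>)"
        "Z (k + int (i0 * length wA)) = Z k + real i0 * \<delta>"
        "k + int (i0 * length wA) + int (length wB) \<in> C"
        "Z (k + int (i0 * length wA) + int (length wB)) = rot L \<rho> (Z k + real i0 * \<delta>)"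
        using to_B[OF kC] by blast
      define y where "y = k + int (i0 * length wA) + int (length wB)"
      have z0: "Z k + real i0 * \<delta> < L" using Zr[OF i0(2)] i0(4) by simp
      have "rot L \<rho> (Z k + real i0 * \<delta>) = Z k + real i0 * \<delta> + t - L"
        unfolding rot_def using i0(3) isB_iff t_def by simp
      then have "Z y < t" using i0(6) z0 unfolding y_def by simp
      then have "Z y < L - real m * t" using u0 u_def by (simp add: algebra_simps)
      then have yC': "y \<in> C'" unfolding C'_def y_def using i0(5) by simp
      have "i0 \<le> m" using i0(1) by linarith
      then have "i0 * length wA \<le> m * length wA" by (rule mult_le_mono1)
      then have "y \<le> N" using kN unfolding y_def by linarith
      then show ?thesis using yC' by blast
    qed
  qed
  have uniq': "D = C'" if cD: "cutset f W wA D" for D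
  proof -
    interpret r: refine_ctx f wA wB m D
      using neA neB m1 cD unfolding W_def by unfold_locales auto
    have RW: "r.W = W" unfolding r.W_def W_def ..
    have RC: "r.R = C" using uniq[OF r.R_cutset] .
    have DC: "D \<subseteq> C" using r.D_sub_R RC by blast
    have Wchain: "(\<forall>j\<le>m. Z (k + int (j * length wA)) = Z k + real j * t) \<and> isB L \<rho> (Z (k + int (m * length wA)))"
      if kD: "k \<in> D" and bW: "blk f D k W" for k
    proof -
      have kC: "k \<in> C" using kD DC by blast
      have bW': "blk f D k r.W" using bW RW by simp
      have nbj: "\<forall>j<m. \<not> isB L \<rho> (Z (k + int (j * length wA)))"
      proof (intro allI impI)
        fix j assume j: "j < m"
        have "blk f C (k + int (j * length wA)) wA" using r.R_blk_W[OF kD bW' j] RC by simp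
        moreover have "k + int (j * length wA) \<in> C" using r.R_interior[OF kD bW'] j RC by simp
        ultimately show "\<not> isB L \<rho> (Z (k + int (j * length wA)))" using blk_type by blast
      qed
      have hh: "\<forall>j<m. \<not> isB L \<rho> (Z k + real j * \<delta>)" using chain_rev[OF kC nbj] .
      have zz: "\<forall>j\<le>m. Z (k + int (j * length wA)) = Z k + real j * t"
      proof (intro allI impI)
        fix j assume "j \<le> m"
        then have "\<forall>i<j. \<not> isB L \<rho> (Z k + real i * \<delta>)" using hh by simp
        then show "Z (k + int (j * length wA)) = Z k + real j * t" using chain[OF kC] dl by simp
      qed
      have "blk f C (k + int (m * length wA)) wB" using r.R_blk_B[OF kD bW'] RC by simp
      moreover have "k + int (m * length wA) \<in> C" using r.R_interior[OF kD bW'] RC by simp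
      ultimately have "isB L \<rho> (Z (k + int (m * length wA)))" using blk_type by blast
      then show ?thesis using zz by blast
    qed
    have Q: "\<forall>x\<in>D. L - Z x < real j * t \<longrightarrow> Z x < L - real m * t" for j
    proof (induction j)
      case 0 then show ?case using DC Zr by force
    next
      case (Suc j)
      show ?case
      proof (intro ballI impI)
        fix x assume xD: "x \<in> D" and zx: "L - Z x < real (Suc j) * t"
        have xC: "x \<in> C" using xD DC by blast
        consider "blk f D x W" | "blk f D x wA" using r.cutD xD RW by auto
        then show "Z x < L - real m * t"
        proof cases
          case 1
          note wc = Wchain[OF xD 1]
          have "m - 1 < m" using m1 by simp
          have nb: "\<not> isB L \<rho> (Z (x + int ((m - 1) * length wA)))"
          proof -
            have bW': "blk f D x r.W" using 1 RW by simp
            have "blk f C (x + int ((m - 1) * length wA)) wA" using r.R_blk_W[OF xD bW' \<open>m - 1 < m\<close>] RC by simp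
            moreover have "x + int ((m - 1) * length wA) \<in> C" using r.R_interior[OF xD bW', of "m - 1"] RC by simp
            ultimately show ?thesis using blk_type by blast
          qed
          have "Z (x + int ((m - 1) * length wA)) = Z x + real (m - 1) * t" using wc by simp
          moreover have "real (m - 1) = real m - 1" using m1 by simp
          ultimately show ?thesis using nb unfolding isB_iff by (simp add: algebra_simps)
        next
          case 2
          have "blk f C x wA" using r.R_blk_A[OF xD 2] RC by simp
          then have nb: "\<not> isB L \<rho> (Z x)" using blk_type xC by blast
          have yD: "x + int (length wA) \<in> D" using 2 unfolding blk_def by blast
          have zy: "Z (x + int (length wA)) = Z x + t" using A_step[OF xC nb] dl by simp
          have "L - Z (x + int (length wA)) < real j * t" using zy zx by (simp add: algebra_simps)
          then have "Z (x + int (length wA)) < L - real m * t" using Suc.IH yD by blast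
          then show ?thesis using zy t0 by simp
        qed
      qed
    qed
    have sub: "D \<subseteq> C'"
    proof
      fix x assume xD: "x \<in> D"
      obtain j where j: "L < real j * t" using ex_less_of_nat_mult[OF t0] by blast
      have "0 \<le> Z x" using Zr xD DC by blast
      then have "L - Z x < real j * t" using j by simp
      then have "Z x < L - real m * t" using Q xD by blast
      then show "x \<in> C'" unfolding C'_def using xD DC by blast
    qed
    have sup: "C' \<subseteq> D"
    proof
      fix c assume cC': "c \<in> C'"
      have cR: "c \<in> r.R" using cC' RC unfolding C'_def by blast
      show "c \<in> D"
      proof (rule ccontr)
        assume "c \<notin> D"
        then obtain k i where h: "k \<in> D" "blk f D k r.W" "1 \<le> i" "i \<le> m" "c = k + int (i * length wA)"
          using r.R_cases[OF cR] by blast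
        have bW: "blk f D k W" using h(2) RW by simp
        note wc = Wchain[OF h(1) bW]
        have zc: "Z c = Z k + real i * t" using wc h by simp
        have "L - t \<le> Z k + real m * t" using wc isB_iff by (metis order_refl)
        moreover have "Z c < L - real m * t" using cC' unfolding C'_def by simp
        moreover have "t \<le> real i * t" using h(3) t0 by simp
        ultimately show False using zc u_def by (simp add: algebra_simps)
      qed
    qed
    show ?thesis using sub sup by blast
  qed
  have G: "gls f C' Z L' t W wA"
  proof (rule gls.intro)
    show "0 < t" by (rule t0)
    show "t < L'" using L'e u0 by simp
    have "t / (L' - t) = inverse ((L - t) / t - real m)"
      using t0 u0 unfolding L'e u_def by (simp add: field_simps)
    moreover have "inverse ((L - t) / t - real m) \<notin> \<rat>"
    proof
      assume "inverse ((L - t) / t - real m) \<in> \<rat>"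
      then have "inverse (inverse ((L - t) / t - real m)) \<in> \<rat>" by (rule Rats_inverse)
      then have "(L - t) / t - real m \<in> \<rat>" by simp
      then have "(L - t) / t - real m + real m \<in> \<rat>" using Rats_add Rats_of_nat by blast
      then show False using q by simp
    qed
    ultimately show "t / (L' - t) \<notin> \<rat>" by simp
    show "W \<noteq> []" using neB unfolding W_def by simp
    show "wA \<noteq> []" by (rule neA)
    show "W \<noteq> wA"
    proof
      assume "W = wA"
      then have a: "m * length wA + length wB = length wA" using lenW by simp
      have b: "1 * length wA \<le> m * length wA" using m1 by (rule mult_le_mono1)
      have c: "0 < length wB" using neB by simp
      show False using a b c by linarith
    qed
  next
    fix k assume "k \<in> C'"
    then show "0 \<le> Z k \<and> Z k < L'" using Zr unfolding C'_def L'_def by auto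
  next
    fix k assume "k \<in> C'"
    then show "blk f C' k (if isB L' t (Z k) then wA else W)" using main by blast
  next
    fix k assume "k \<in> C'"
    then show "Z (k + int (length (if isB L' t (Z k) then wA else W))) = rot L' t (Z k)" using main by blast
  next
    fix N show "\<exists>k\<in>C'. k \<le> N" by (rule unb')
  next
    fix D assume "cutset f W wA D"
    then show "D = C'" by (rule uniq')
  qed
  have "ratio L' t = (L - t) / t - real m"
    unfolding ratio_def using t0 u0 L'e ut unfolding u_def by (auto simp: field_simps)
  also have "\<dots> = frac ((L - t) / t)" unfolding frac_def using mq by simp
  finally show ?thesis using G unfolding m_def t_def W_def by blast
qed

end

lemma (in gls) trans_any:
  "\<exists>C' Z' L' \<rho>'. gls f C' Z' L' \<rho>' (concat (replicate (nat \<lfloor>1 / ratio L \<rho>\<rfloor>) wA) @ wB) wA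
     \<and> ratio L' \<rho>' = frac (1 / ratio L \<rho>)"
proof (cases "L < 2 * \<rho>")
  case True
  have "1 / ratio L \<rho> = \<rho> / (L - \<rho>)" unfolding ratio_def using True by simp
  then show ?thesis using trans_plus[OF True] by simp
next
  case False
  have "1 / ratio L \<rho> = (L - \<rho>) / \<rho>" unfolding ratio_def using False by simp
  then show ?thesis using trans_minus[OF False] by simp
qed

lemma cutset_single:
  assumes c: "cutset f [a] [b] D"
  shows "D = UNIV"
proof -
  have suc: "k + 1 \<in> D" if "k \<in> D" for k
    using c that unfolding cutset_def blk_def by auto
  have "x \<in> D" for x
  proof -
    obtain k where k: "k \<in> D" "k \<le> x" using c unfolding cutset_def by blast
    have "k + int n \<in> D" for n
    proof (induction n)
      case 0 then show ?case using k by simp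
    next
      case (Suc n)
      have "k + int (Suc n) = (k + int n) + 1" by simp
      then show ?case using suc[OF Suc.IH] by metis
    qed
    then have "k + int (nat (x - k)) \<in> D" .
    then show ?thesis using k by simp
  qed
  then show ?thesis by blast
qed

lemma blk_single_UNIV: "blk f UNIV k [f k]"
  unfolding blk_def win_def by auto

lemma gls_base:
  assumes a0: "0 < \<alpha>" and a1: "\<alpha> < 1" and irr: "\<alpha> \<notin> \<rat>" and ab: "a \<noteq> b"
    and fdef: "\<And>k. vseq \<alpha> \<theta> k = (if isB 1 \<alpha> (frac (of_int k * \<alpha> + \<theta>)) then b else a)"
  shows "gls (vseq \<alpha> \<theta>) UNIV (\<lambda>k. frac (of_int k * \<alpha> + \<theta>)) 1 \<alpha> [a] [b]"
proof (rule gls.intro)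
  show "0 < \<alpha>" "\<alpha> < 1" by fact+
  show "\<alpha> / (1 - \<alpha>) \<notin> \<rat>"
  proof
    assume q: "\<alpha> / (1 - \<alpha>) \<in> \<rat>"
    define r where "r = \<alpha> / (1 - \<alpha>)"
    have "\<alpha> = r / (1 + r)" unfolding r_def using a0 a1 by (simp add: field_simps)
    moreover have "r \<in> \<rat>" using q unfolding r_def by simp
    then have "r / (1 + r) \<in> \<rat>" by (intro Rats_divide Rats_add) auto
    ultimately show False using irr by simp
  qed
  show "[a] \<noteq> []" "[b] \<noteq> []" "[a] \<noteq> [b]" using ab by auto
next
  fix k :: int
  show "0 \<le> frac (of_int k * \<alpha> + \<theta>) \<and> frac (of_int k * \<alpha> + \<theta>) < 1" by (simp add: frac_lt_1)
next
  fix k :: int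
  have "[vseq \<alpha> \<theta> k] = (if isB 1 \<alpha> (frac (of_int k * \<alpha> + \<theta>)) then [b] else [a])" using fdef by simp
  then show "blk (vseq \<alpha> \<theta>) UNIV k (if isB 1 \<alpha> (frac (of_int k * \<alpha> + \<theta>)) then [b] else [a])"
    using blk_single_UNIV[of "vseq \<alpha> \<theta>" k] by simp
next
  fix k :: int
  have e: "of_int (k + 1) * \<alpha> + \<theta> = (of_int k * \<alpha> + \<theta>) + \<alpha>" by (simp add: algebra_simps)
  have fa: "frac \<alpha> = \<alpha>" using a0 a1 by (simp add: frac_eq)
  have "frac (of_int (k + 1) * \<alpha> + \<theta>) = rot 1 \<alpha> (frac (of_int k * \<alpha> + \<theta>))"
    unfolding e frac_add fa rot_def by simp
  then show "frac (of_int (k + int (length (if isB 1 \<alpha> (frac (of_int k * \<alpha> + \<theta>)) then [b] else [a]))) * \<alpha> + \<theta>) =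
         rot 1 \<alpha> (frac (of_int k * \<alpha> + \<theta>))" by simp
next
  fix N :: int show "\<exists>k\<in>UNIV. k \<le> N" by blast
next
  fix D assume "cutset (vseq \<alpha> \<theta>) [a] [b] D"
  then show "D = UNIV" by (rule cutset_single)
qed

lemma levels:
  assumes a0: "0 < \<alpha>" and a1: "\<alpha> < 1" and irr: "\<alpha> \<notin> \<rat>"
  shows "1 \<le> n \<Longrightarrow> \<exists>C Z L \<rho>. gls (vseq \<alpha> \<theta>) C Z L \<rho> (sw \<alpha> (n + 1)) (sw \<alpha> n) \<and> ratio L \<rho> = cf_rem \<alpha> n"
proof (induction n rule: nat_induct_at_least)
  case base
  have "(1 / 2 :: real) \<in> \<rat>" by simp
  then have ne: "\<alpha> \<noteq> 1 / 2" using irr by metis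
  have cf1: "cf \<alpha> 1 = nat \<lfloor>1 / \<alpha>\<rfloor>" unfolding cf_def by simp
  have cr1: "cf_rem \<alpha> 1 = frac (1 / \<alpha>)" by simp
  show ?case
  proof (cases "\<alpha> < 1 / 2")
    case True
    have nB: "\<not> 1 < 2 * \<alpha>" using True by simp
    have fd: "vseq \<alpha> \<theta> k = (if isB 1 \<alpha> (frac (of_int k * \<alpha> + \<theta>)) then 1 else 0)" for k
      unfolding vseq_def isB_def using nB by (simp add: frac_lt_1)
    interpret g0: gls "vseq \<alpha> \<theta>" UNIV "\<lambda>k. frac (of_int k * \<alpha> + \<theta>)" 1 \<alpha> "[0]" "[1]"
      by (rule gls_base[OF a0 a1 irr]) (use fd in auto)
    have r0: "ratio 1 \<alpha> = \<alpha> / (1 - \<alpha>)" unfolding ratio_def using nB by simp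
    have inv: "1 / ratio 1 \<alpha> = 1 / \<alpha> - 1" unfolding r0 using a0 a1 by (simp add: field_simps)
    have fl: "\<lfloor>1 / \<alpha> - 1\<rfloor> = \<lfloor>1 / \<alpha>\<rfloor> - 1" by (simp add: floor_diff_of_int[of _ 1, simplified])
    have "1 < 1 / \<alpha>" using a0 a1 by simp
    then have flpos: "1 \<le> \<lfloor>1 / \<alpha>\<rfloor>" by (simp add: le_floor_iff)
    have mm: "nat \<lfloor>1 / ratio 1 \<alpha>\<rfloor> = cf \<alpha> 1 - 1" unfolding inv fl cf1 using flpos by simp
    have fr: "frac (1 / ratio 1 \<alpha>) = cf_rem \<alpha> 1" unfolding inv cr1 frac_def fl by simp
    have sw2: "sw \<alpha> 2 = concat (replicate (cf \<alpha> 1 - 1) [0]) @ [1]"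
      by (simp add: numeral_2_eq_2)
    obtain C' Z' L' \<rho>' where G: "gls (vseq \<alpha> \<theta>) C' Z' L' \<rho>' (concat (replicate (nat \<lfloor>1 / ratio 1 \<alpha>\<rfloor>) [0]) @ [1]) [0]"
      and R: "ratio L' \<rho>' = frac (1 / ratio 1 \<alpha>)" using g0.trans_any by blast
    have "gls (vseq \<alpha> \<theta>) C' Z' L' \<rho>' (sw \<alpha> (1 + 1)) (sw \<alpha> 1)" using G mm sw2 by simp
    moreover have "ratio L' \<rho>' = cf_rem \<alpha> 1" using R fr by simp
    ultimately show ?thesis by blast
  next
    case False
    then have gt: "1 / 2 < \<alpha>" using ne by simp
    have nB: "1 < 2 * \<alpha>" using gt by simp
    have fd: "vseq \<alpha> \<theta> k = (if isB 1 \<alpha> (frac (of_int k * \<alpha> + \<theta>)) then 0 else 1)" for k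
      unfolding vseq_def isB_def using nB by (simp add: frac_lt_1)
    interpret g0: gls "vseq \<alpha> \<theta>" UNIV "\<lambda>k. frac (of_int k * \<alpha> + \<theta>)" 1 \<alpha> "[1]" "[0]"
      by (rule gls_base[OF a0 a1 irr]) (use fd in auto)
    have "1 < 1 / \<alpha>" using a0 a1 by simp
    moreover have "1 / \<alpha> < 2" using gt a0 by (simp add: field_simps)
    ultimately have fl: "\<lfloor>1 / \<alpha>\<rfloor> = 1" by (simp add: floor_eq_iff)
    have cf11: "cf \<alpha> 1 = 1" using cf1 fl by simp
    have sw2: "sw \<alpha> (1 + 1) = [1]" using cf11 by (simp add: numeral_2_eq_2)
    have "ratio 1 \<alpha> = (1 - \<alpha>) / \<alpha>" unfolding ratio_def using nB by simp
    also have "\<dots> = 1 / \<alpha> - 1" using a0 by (simp add: field_simps)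
    also have "\<dots> = cf_rem \<alpha> 1" unfolding cr1 frac_def fl by simp
    finally have "ratio 1 \<alpha> = cf_rem \<alpha> 1" .
    moreover have "gls (vseq \<alpha> \<theta>) UNIV (\<lambda>k. frac (of_int k * \<alpha> + \<theta>)) 1 \<alpha> (sw \<alpha> (1 + 1)) (sw \<alpha> 1)"
      using g0.gls_axioms sw2 by simp
    ultimately show ?thesis by blast
  qed
next
  case (Suc n)
  then obtain C Z L \<rho> where G: "gls (vseq \<alpha> \<theta>) C Z L \<rho> (sw \<alpha> (n + 1)) (sw \<alpha> n)" and R: "ratio L \<rho> = cf_rem \<alpha> n"
    by blast
  interpret g: gls "vseq \<alpha> \<theta>" C Z L \<rho> "sw \<alpha> (n + 1)" "sw \<alpha> n" by (rule G)
  obtain C' Z' L' \<rho>' where G': "gls (vseq \<alpha> \<theta>) C' Z' L' \<rho>' (concat (replicate (nat \<lfloor>1 / ratio L \<rho>\<rfloor>) (sw \<alpha> (n + 1))) @ sw \<alpha> n) (sw \<alpha> (n + 1))"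
    and R': "ratio L' \<rho>' = frac (1 / ratio L \<rho>)" using g.trans_any by blast
  obtain n' where n': "n = Suc n'" using Suc.hyps by (cases n) auto
  have cfe: "cf \<alpha> (n + 1) = nat \<lfloor>1 / ratio L \<rho>\<rfloor>" unfolding cf_def R by simp
  have "sw \<alpha> (Suc n + 1) = sw \<alpha> (Suc (Suc (Suc n')))" using n' by simp
  also have "\<dots> = concat (replicate (cf \<alpha> (n' + 2)) (sw \<alpha> (n' + 2))) @ sw \<alpha> (Suc n')" by simp
  also have "\<dots> = concat (replicate (nat \<lfloor>1 / ratio L \<rho>\<rfloor>) (sw \<alpha> (n + 1))) @ sw \<alpha> n"
    using cfe n' by (simp add: numeral_2_eq_2)
  finally have sw: "sw \<alpha> (Suc n + 1) = concat (replicate (nat \<lfloor>1 / ratio L \<rho>\<rfloor>) (sw \<alpha> (n + 1))) @ sw \<alpha> n" .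
  have "ratio L' \<rho>' = cf_rem \<alpha> (Suc n)" using R' R by simp
  moreover have "gls (vseq \<alpha> \<theta>) C' Z' L' \<rho>' (sw \<alpha> (Suc n + 1)) (sw \<alpha> (Suc n))" using G' sw by simp
  ultimately show ?case by blast
qed

lemma all_partitions:
  assumes a0: "0 < \<alpha>" and a1: "\<alpha> < 1" and irr: "\<alpha> \<notin> \<rat>"
  shows "\<exists>!p. is_partition n \<alpha> (vseq \<alpha> \<theta>) (fst p) (snd p)"
proof (cases "n = 0")
  case True
  have w1: "sword \<alpha> (int n) = [0]" "sword \<alpha> (int n - 1) = [1]" using True unfolding sword_def by simp_all
  have v01: "vseq \<alpha> \<theta> k = 0 \<or> vseq \<alpha> \<theta> k = 1" for k unfolding vseq_def by simp
  have cu: "cutset (vseq \<alpha> \<theta>) [0] [1] UNIV"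
    unfolding cutset_def
  proof (intro conjI allI ballI)
    fix N :: int show "\<exists>k\<in>UNIV. k \<le> N" by blast
  next
    fix k :: int
    have b: "blk (vseq \<alpha> \<theta>) UNIV k [vseq \<alpha> \<theta> k]" by (rule blk_single_UNIV)
    show "blk (vseq \<alpha> \<theta>) UNIV k [0] \<or> blk (vseq \<alpha> \<theta>) UNIV k [1]"
      using v01[of k] b by auto
  qed
  show ?thesis
    by (rule cutset_unique_partition[OF cu]) (use cutset_single w1 in auto)
next
  case False
  then have "1 \<le> n" by simp
  then obtain C Z L \<rho> where G: "gls (vseq \<alpha> \<theta>) C Z L \<rho> (sw \<alpha> (n + 1)) (sw \<alpha> n)"
    using levels[OF a0 a1 irr] by blast
  interpret g: gls "vseq \<alpha> \<theta>" C Z L \<rho> "sw \<alpha> (n + 1)" "sw \<alpha> n" by (rule G)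
  have w: "sw \<alpha> (n + 1) = sword \<alpha> (int n)" "sw \<alpha> n = sword \<alpha> (int n - 1)" unfolding sword_def
    by (simp_all add: nat_add_distrib)
  show ?thesis
    by (rule cutset_unique_partition[OF g.cutC g.neA g.neB]) (use g.uniq w in auto)
qed

theorem lemma3p2:
  fixes \<alpha> :: real
  assumes "0 < \<alpha>" "\<alpha> < 1" "\<alpha> \<notin> \<rat>"
  shows "(\<forall>n::nat. \<exists>!p. is_partition n \<alpha> (vseq \<alpha> 0) (fst p) (snd p))
       \<and> (\<forall>n::nat. \<forall>\<theta>::real. 0 \<le> \<theta> \<and> \<theta> < 1 \<longrightarrow>
            (\<exists>!p. is_partition n \<alpha> (vseq \<alpha> \<theta>) (fst p) (snd p)))"
  using all_partitions[OF assms] by blast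

end
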